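(* Let $Q^n,Q^{n-1}$ be grid functions satisfying the boundary conditions with symmetric trace-free values, and $\overline P_{ijk}=\frac32P(Q^n_{ijk})-\frac12P(Q^{n-1}_{ijk})$. Define, for matrix-valued grid functions $Q$, $\mathbb{A}(Q)_{ijk}=\frac{Q_{ijk}}{\Delta t}-\frac{ML_1}{2}\Delta_hQ_{ijk}+\frac M2\big(\overline P_{ijk}:Q_{ijk}\big)\overline P_{ijk}-M\frac{L_2+L_3}{4}\alpha_h(Q)_{ijk}$. Then $\mathbb{A}$ is symmetric and positive definite on the space $V$ of matrix-valued grid functions satisfying the boundary conditions with symmetric trace-free values, i.e. $\langle\mathbb{A}(Q^1),Q^2\rangle_h=\langle Q^1,\mathbb{A}(Q^2)\rangle_h$ for all $Q^1,Q^2\in V$, and $\langle\mathbb{A}(Q),Q\rangle_h>0$ for all $Q\in V$, $Q\neq0$.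
   Context: Parameters: $a,b\in\mathbb{R}$, $c,L_1,L_2,L_3,M>0$, $\Delta t>0$, and $A_0>0$ such that $\inf\{\frac a2\operatorname{tr}(Q^2)-\frac b3\operatorname{tr}(Q^3)+\frac c4(\operatorname{tr}(Q^2))^2+A_0:\ Q\in\mathbb{R}^{3\times3}\text{ symmetric}\}>0$. For symmetric $Q$: $r(Q)=\sqrt{2(\frac a2\operatorname{tr}(Q^2)-\frac b3\operatorname{tr}(Q^3)+\frac c4(\operatorname{tr}(Q^2))^2+A_0)}$, $S(Q)=aQ-b(Q^2-\frac13\operatorname{tr}(Q^2)I)+c\operatorname{tr}(Q^2)Q$, $P(Q)=S(Q)/r(Q)$; $A:B=\sum_{i,j}A_{ij}B_{ij}$. Grid: $N\in\mathbb{N}$, $h=1/(N+1)$. Grid functions are families $(f_{ijk})_{(i,j,k)\in\mathbb{Z}^3}$ of real $3\times3$ matrices; the boundary conditions mean $f_{ijk}=0$ whenever $(i,j,k)\notin\{1,\dots,N\}^3$. $D^\pm_1f_{ijk}=\pm(f_{i\pm1,j,k}-f_{ijk})/h$, $D^c_1f_{ijk}=(f_{i+1,j,k}-f_{i-1,j,k})/(2h)$, analogously in directions 2, 3. $\Delta_hf=\sum_\alpha D^-_\alpha D^+_\alpha f$, $\alpha_h(Q)_{ws}=\sum_\beta[D^c_wD^c_\beta Q_{s\beta}+D^c_sD^c_\beta Q_{w\beta}]-\frac23\sum_{\beta,\gamma}D^c_\beta D^c_\gamma Q_{\beta\gamma}\delta_{ws}$. $\langle A,B\rangle_h=h^3\sum_{i,j,k=0}^{N+1}A_{ijk}:B_{ijk}$.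 *)

theory Defs
  imports "HOL-Analysis.Analysis"
begin

text \<open>3x3 real matrices are real^3^3; grid points are int^3; grid functions map
  grid points to matrices. Directions 1,2,3 of the paper are the three elements of type 3.\<close>

type_synonym mat3 = "real^3^3"
type_synonym gridfun = "int^3 \<Rightarrow> mat3"

definition frob :: "mat3 \<Rightarrow> mat3 \<Rightarrow> real" where
  "frob A B = (\<Sum>i\<in>UNIV. \<Sum>j\<in>UNIV. A $ i $ j * B $ i $ j)"

definition symm :: "mat3 \<Rightarrow> bool" where
  "symm Q \<longleftrightarrow> transpose Q = Q"

definition bulk_energy :: "real \<Rightarrow> real \<Rightarrow> real \<Rightarrow> real \<Rightarrow> mat3 \<Rightarrow> real" where
  "bulk_energy a b c A0 Q =
     a / 2 * trace (Q ** Q) - b / 3 * trace (Q ** Q ** Q) + c / 4 * (trace (Q ** Q))^2 + A0"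

definition rQ :: "real \<Rightarrow> real \<Rightarrow> real \<Rightarrow> real \<Rightarrow> mat3 \<Rightarrow> real" where
  "rQ a b c A0 Q = sqrt (2 * bulk_energy a b c A0 Q)"

definition SQ :: "real \<Rightarrow> real \<Rightarrow> real \<Rightarrow> mat3 \<Rightarrow> mat3" where
  "SQ a b c Q = a *\<^sub>R Q - b *\<^sub>R (Q ** Q - (trace (Q ** Q) / 3) *\<^sub>R mat 1)
               + (c * trace (Q ** Q)) *\<^sub>R Q"

definition PQ :: "real \<Rightarrow> real \<Rightarrow> real \<Rightarrow> real \<Rightarrow> mat3 \<Rightarrow> mat3" where
  "PQ a b c A0 Q = (1 / rQ a b c A0 Q) *\<^sub>R SQ a b c Q"

definition meshsize :: "nat \<Rightarrow> real" where
  "meshsize N = 1 / (real N + 1)"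

definition interior_pts :: "nat \<Rightarrow> (int^3) set" where
  "interior_pts N = {p. \<forall>k. 1 \<le> p $ k \<and> p $ k \<le> int N}"

definition closed_pts :: "nat \<Rightarrow> (int^3) set" where
  "closed_pts N = {p. \<forall>k. 0 \<le> p $ k \<and> p $ k \<le> int N + 1}"

definition bc :: "nat \<Rightarrow> gridfun \<Rightarrow> bool" where
  "bc N f \<longleftrightarrow> (\<forall>p. p \<notin> interior_pts N \<longrightarrow> f p = 0)"

definition Vspace :: "nat \<Rightarrow> gridfun set" where
  "Vspace N = {f. bc N f \<and> (\<forall>p. symm (f p) \<and> trace (f p) = 0)}"

definition Dp :: "nat \<Rightarrow> 3 \<Rightarrow> (int^3 \<Rightarrow> 'a::real_vector) \<Rightarrow> int^3 \<Rightarrow> 'a" where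
  "Dp N \<alpha> f p = (1 / meshsize N) *\<^sub>R (f (p + axis \<alpha> 1) - f p)"

definition Dm :: "nat \<Rightarrow> 3 \<Rightarrow> (int^3 \<Rightarrow> 'a::real_vector) \<Rightarrow> int^3 \<Rightarrow> 'a" where
  "Dm N \<alpha> f p = (1 / meshsize N) *\<^sub>R (f p - f (p - axis \<alpha> 1))"

definition Dc :: "nat \<Rightarrow> 3 \<Rightarrow> (int^3 \<Rightarrow> 'a::real_vector) \<Rightarrow> int^3 \<Rightarrow> 'a" where
  "Dc N \<alpha> f p = (1 / (2 * meshsize N)) *\<^sub>R (f (p + axis \<alpha> 1) - f (p - axis \<alpha> 1))"

definition lap_h :: "nat \<Rightarrow> gridfun \<Rightarrow> gridfun" where
  "lap_h N f = (\<lambda>p. \<Sum>\<alpha>\<in>UNIV. Dm N \<alpha> (Dp N \<alpha> f) p)"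

definition alpha_h :: "nat \<Rightarrow> gridfun \<Rightarrow> gridfun" where
  "alpha_h N Q = (\<lambda>p. \<chi> w s.
      (\<Sum>\<beta>\<in>UNIV. Dc N w (Dc N \<beta> (\<lambda>q. Q q $ s $ \<beta>)) p
                 + Dc N s (Dc N \<beta> (\<lambda>q. Q q $ w $ \<beta>)) p)
      - 2 / 3 * (\<Sum>\<beta>\<in>UNIV. \<Sum>\<gamma>\<in>UNIV. Dc N \<beta> (Dc N \<gamma> (\<lambda>q. Q q $ \<beta> $ \<gamma>)) p)
        * (if w = s then 1 else 0))"

definition ip_h :: "nat \<Rightarrow> gridfun \<Rightarrow> gridfun \<Rightarrow> real" where
  "ip_h N A B = meshsize N ^ 3 * (\<Sum>p\<in>closed_pts N. frob (A p) (B p))"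

definition Pbar :: "real \<Rightarrow> real \<Rightarrow> real \<Rightarrow> real \<Rightarrow> gridfun \<Rightarrow> gridfun \<Rightarrow> gridfun" where
  "Pbar a b c A0 Qn Qnm1 = (\<lambda>p. (3/2) *\<^sub>R PQ a b c A0 (Qn p) - (1/2) *\<^sub>R PQ a b c A0 (Qnm1 p))"

definition opA :: "real \<Rightarrow> real \<Rightarrow> real \<Rightarrow> real \<Rightarrow> real \<Rightarrow> real \<Rightarrow> real \<Rightarrow> real \<Rightarrow> real
                  \<Rightarrow> nat \<Rightarrow> gridfun \<Rightarrow> gridfun \<Rightarrow> gridfun \<Rightarrow> gridfun" where
  "opA a b c A0 L1 L2 L3 M dt N Qn Qnm1 Q = (\<lambda>p.
      let P = Pbar a b c A0 Qn Qnm1 p in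
      (1 / dt) *\<^sub>R Q p - (M * L1 / 2) *\<^sub>R lap_h N Q p
      + (M / 2 * frob P (Q p)) *\<^sub>R P
      - (M * (L2 + L3) / 4) *\<^sub>R alpha_h N Q p)"

end

theory Submission
  imports Defs
begin


definition box :: "nat \<Rightarrow> int \<Rightarrow> (int^3) set" where
  "box N r = {p. \<forall>k. -r \<le> p $ k \<and> p $ k \<le> int N + 1 + r}"

definition supp_in :: "nat \<Rightarrow> int \<Rightarrow> (int^3 \<Rightarrow> real) \<Rightarrow> bool" where
  "supp_in N r f \<longleftrightarrow> (\<forall>p. p \<notin> box N r \<longrightarrow> f p = 0)"

definition SS :: "nat \<Rightarrow> (int^3 \<Rightarrow> real) \<Rightarrow> real" where
  "SS N g = (\<Sum>p\<in>box N 10. g p)"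

lemma finite_box: "finite (box N r)"
proof -
  have "box N r \<subseteq> vec_lambda ` (PiE UNIV (\<lambda>_. {-r..int N + 1 + r}))"
  proof
    fix p assume "p \<in> box N r"
    then have "(\<lambda>k. p $ k) \<in> PiE UNIV (\<lambda>_. {-r..int N + 1 + r})" by (auto simp: box_def)
    then show "p \<in> vec_lambda ` (PiE UNIV (\<lambda>_. {-r..int N + 1 + r}))"
      by (metis image_eqI vec_lambda_eta)
  qed
  moreover have "finite (PiE (UNIV::3 set) (\<lambda>_. {-r..int N + 1 + r}))"
    by (intro finite_PiE) auto
  ultimately show ?thesis by (meson finite_imageI finite_subset)
qed

lemma supp_in_mono: "supp_in N r f \<Longrightarrow> r \<le> r' \<Longrightarrow> supp_in N r' f"
  unfolding supp_in_def box_def by (smt (verit, del_insts) mem_Collect_eq)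

lemma shift_out:
  assumes "\<forall>k. \<bar>e $ k\<bar> \<le> 1" "p \<notin> box N (r+1)" shows "p + e \<notin> box N r"
proof
  assume a: "p + e \<in> box N r"
  obtain k where k: "\<not>(-(r+1) \<le> p$k \<and> p$k \<le> int N+1+(r+1))" using assms(2) by (auto simp: box_def)
  have "-r \<le> (p+e)$k \<and> (p+e)$k \<le> int N+1+r" using a by (auto simp: box_def)
  moreover have "\<bar>e$k\<bar> \<le> 1" using assms(1) by auto
  ultimately show False using k by auto
qed

lemma supp_shift: "supp_in N r f \<Longrightarrow> \<forall>k. \<bar>e $ k\<bar> \<le> 1 \<Longrightarrow> supp_in N (r+1) (\<lambda>p. f (p + e))"
  unfolding supp_in_def using shift_out by blast

lemma axis_bd: "\<forall>k. \<bar>(axis \<alpha> 1 :: int^3) $ k\<bar> \<le> 1" "\<forall>k. \<bar>(- axis \<alpha> 1 :: int^3) $ k\<bar> \<le> 1"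
  by (auto simp: axis_def)

lemma SS_cong: "(\<And>p. f p = g p) \<Longrightarrow> SS N f = SS N g" by (metis ext)
lemma SS_add: "SS N (\<lambda>p. f p + g p) = SS N f + SS N g" by (simp add: SS_def sum.distrib)
lemma SS_diff: "SS N (\<lambda>p. f p - g p) = SS N f - SS N g" by (simp add: SS_def sum_subtractf)
lemma SS_cmult: "SS N (\<lambda>p. c * f p) = c * SS N f" by (simp add: SS_def sum_distrib_left)
lemma SS_minus: "SS N (\<lambda>p. - f p) = - SS N f" by (simp add: SS_def sum_negf)
lemma SS_sum: "SS N (\<lambda>p. \<Sum>i\<in>I. F i p) = (\<Sum>i\<in>I. SS N (F i))" by (simp add: SS_def sum.swap[of _ I])
lemma SS_nonneg: "(\<And>p. 0 \<le> f p) \<Longrightarrow> 0 \<le> SS N f" by (simp add: SS_def sum_nonneg)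

lemma sum_shift:
  assumes e: "\<forall>k. \<bar>e $ k\<bar> \<le> 1" and g: "supp_in N 9 g"
  shows "SS N (\<lambda>p. g (p + e)) = SS N g"
proof -
  have inj: "inj_on (\<lambda>p. p + e) (box N 10)" by (auto simp: inj_on_def)
  have "SS N (\<lambda>p. g (p + e)) = (\<Sum>q\<in>(\<lambda>p. p + e) ` box N 10. g q)"
    unfolding SS_def by (simp add: sum.reindex[OF inj] o_def)
  also have "\<dots> = (\<Sum>q\<in>box N 9. g q)"
  proof (rule sum.mono_neutral_right)
    show "finite ((\<lambda>p. p + e) ` box N 10)" using finite_box by auto
    show "box N 9 \<subseteq> (\<lambda>p. p + e) ` box N 10"
    proof
      fix q assume q: "q \<in> box N 9"
      have "q - e \<in> box N 10" unfolding box_def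
      proof (safe)
        fix k
        have "-9 \<le> q$k" "q$k \<le> int N + 1 + 9" "\<bar>e$k\<bar> \<le> 1" using q e by (auto simp: box_def)
        then show "-10 \<le> (q - e)$k" "(q - e)$k \<le> int N + 1 + 10" by auto
      qed
      then show "q \<in> (\<lambda>p. p + e) ` box N 10" by (rule rev_image_eqI) simp
    qed
    show "\<forall>i\<in>(\<lambda>p. p + e) ` box N 10 - box N 9. g i = 0" using g by (auto simp: supp_in_def)
  qed
  also have "\<dots> = SS N g" unfolding SS_def
  proof (rule sum.mono_neutral_left)
    show "finite (box N 10)" by (rule finite_box)
    show "box N 9 \<subseteq> box N 10" unfolding box_def
    proof (safe)
      fix x :: "int^3" and k assume "\<forall>k. - 9 \<le> x $ k \<and> x $ k \<le> int N + 1 + 9"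
      then have "- 9 \<le> x $ k \<and> x $ k \<le> int N + 1 + 9" by blast
      then show "- 10 \<le> x $ k" "x $ k \<le> int N + 1 + 10" by linarith+
    qed
    show "\<forall>i\<in>box N 10 - box N 9. g i = 0" using g by (auto simp: supp_in_def)
  qed
  finally show ?thesis .
qed

lemma Dc_real: "Dc N \<alpha> (f :: int^3 \<Rightarrow> real) p = (1 / (2 * meshsize N)) * (f (p + axis \<alpha> 1) - f (p - axis \<alpha> 1))"
  by (simp add: Dc_def)
lemma Dp_real: "Dp N \<alpha> (f :: int^3 \<Rightarrow> real) p = (1 / meshsize N) * (f (p + axis \<alpha> 1) - f p)"
  by (simp add: Dp_def)
lemma Dm_real: "Dm N \<alpha> (f :: int^3 \<Rightarrow> real) p = (1 / meshsize N) * (f p - f (p - axis \<alpha> 1))"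
  by (simp add: Dm_def)

lemma supp_mult_r: "supp_in N r g \<Longrightarrow> supp_in N r (\<lambda>p. f p * g p)" by (simp add: supp_in_def)
lemma supp_mult_l: "supp_in N r f \<Longrightarrow> supp_in N r (\<lambda>p. f p * g p)" by (simp add: supp_in_def)

lemma supp_Dc: "supp_in N r f \<Longrightarrow> supp_in N (r+1) (Dc N \<alpha> f)"
proof -
  assume f: "supp_in N r f"
  have 1: "supp_in N (r+1) (\<lambda>p. f (p + axis \<alpha> 1))" by (rule supp_shift[OF f axis_bd(1)])
  have 2: "supp_in N (r+1) (\<lambda>p. f (p + - axis \<alpha> 1))" by (rule supp_shift[OF f axis_bd(2)])
  show ?thesis using 1 2 unfolding supp_in_def by (simp add: Dc_real)
qed
lemma supp_Dp: "supp_in N r f \<Longrightarrow> supp_in N (r+1) (Dp N \<alpha> f)"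
proof -
  assume f: "supp_in N r f"
  have 1: "supp_in N (r+1) (\<lambda>p. f (p + axis \<alpha> 1))" by (rule supp_shift[OF f axis_bd(1)])
  have 2: "supp_in N (r+1) f" using f supp_in_mono by force
  show ?thesis using 1 2 unfolding supp_in_def by (simp add: Dp_real)
qed

lemma byparts_Dc:
  fixes f g :: "int^3 \<Rightarrow> real"
  assumes f: "supp_in N 8 f" and g: "supp_in N 8 g"
  shows "SS N (\<lambda>p. Dc N \<alpha> f p * g p) = - SS N (\<lambda>p. f p * Dc N \<alpha> g p)"
proof -
  define e :: "int^3" where "e = axis \<alpha> 1"
  have f9: "supp_in N 9 f" using f supp_in_mono by force
  have A: "SS N (\<lambda>p. f (p + e) * g p) = SS N (\<lambda>p. f p * g (p - e))"
  proof -
    have "SS N (\<lambda>p. (\<lambda>q. f q * g (q - e)) (p + e)) = SS N (\<lambda>q. f q * g (q - e))"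
      by (rule sum_shift) (use axis_bd f9 supp_mult_l e_def in auto)
    then show ?thesis by simp
  qed
  have B: "SS N (\<lambda>p. f (p - e) * g p) = SS N (\<lambda>p. f p * g (p + e))"
  proof -
    have "SS N (\<lambda>p. (\<lambda>q. f q * g (q + e)) (p + - e)) = SS N (\<lambda>q. f q * g (q + e))"
      by (rule sum_shift) (use axis_bd f9 supp_mult_l e_def in auto)
    then show ?thesis by simp
  qed
  have "SS N (\<lambda>p. Dc N \<alpha> f p * g p) = (1/(2*meshsize N)) * (SS N (\<lambda>p. f (p + e) * g p) - SS N (\<lambda>p. f (p - e) * g p))"
    unfolding SS_diff[symmetric] SS_cmult[symmetric] by (rule SS_cong) (simp add: Dc_real e_def algebra_simps)
  also have "\<dots> = (1/(2*meshsize N)) * (SS N (\<lambda>p. f p * g (p - e)) - SS N (\<lambda>p. f p * g (p + e)))"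
    using A B by simp
  also have "\<dots> = - SS N (\<lambda>p. f p * Dc N \<alpha> g p)"
    unfolding SS_diff[symmetric] SS_cmult[symmetric] SS_minus[symmetric] by (rule SS_cong) (simp add: Dc_real e_def algebra_simps)
  finally show ?thesis .
qed

lemma byparts_Dpm:
  fixes f g :: "int^3 \<Rightarrow> real"
  assumes f: "supp_in N 8 f" and g: "supp_in N 8 g"
  shows "SS N (\<lambda>p. Dm N \<alpha> (Dp N \<alpha> f) p * g p) = - SS N (\<lambda>p. Dp N \<alpha> f p * Dp N \<alpha> g p)"
proof -
  define e :: "int^3" where "e = axis \<alpha> 1"
  define F where "F = Dp N \<alpha> f"
  have F9: "supp_in N 9 F" unfolding F_def using supp_Dp[OF f] by simp
  have B: "SS N (\<lambda>p. F (p - e) * g p) = SS N (\<lambda>p. F p * g (p + e))"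
  proof -
    have "SS N (\<lambda>p. (\<lambda>q. F q * g (q + e)) (p + - e)) = SS N (\<lambda>q. F q * g (q + e))"
      by (rule sum_shift) (use axis_bd F9 supp_mult_l e_def in auto)
    then show ?thesis by simp
  qed
  have "SS N (\<lambda>p. Dm N \<alpha> F p * g p) = (1/meshsize N) * (SS N (\<lambda>p. F p * g p) - SS N (\<lambda>p. F (p - e) * g p))"
    unfolding SS_diff[symmetric] SS_cmult[symmetric] by (rule SS_cong) (simp add: Dm_real e_def algebra_simps)
  also have "\<dots> = (1/meshsize N) * (SS N (\<lambda>p. F p * g p) - SS N (\<lambda>p. F p * g (p + e)))"
    using B by simp
  also have "\<dots> = - SS N (\<lambda>p. F p * Dp N \<alpha> g p)"
    unfolding SS_diff[symmetric] SS_cmult[symmetric] SS_minus[symmetric] by (rule SS_cong) (simp add: Dp_real e_def algebra_simps)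
  finally show ?thesis unfolding F_def .
qed


lemma lap_comp: "lap_h N Q p $ i $ j = (\<Sum>\<alpha>\<in>UNIV. Dm N \<alpha> (Dp N \<alpha> (\<lambda>q. Q q $ i $ j)) p)"
  by (simp add: lap_h_def Dm_def Dp_def sum_component)
lemma alpha_comp: "alpha_h N Q p $ w $ s = (\<Sum>\<beta>\<in>UNIV. Dc N w (Dc N \<beta> (\<lambda>q. Q q $ s $ \<beta>)) p
                 + Dc N s (Dc N \<beta> (\<lambda>q. Q q $ w $ \<beta>)) p)
      - 2 / 3 * (\<Sum>\<beta>\<in>UNIV. \<Sum>\<gamma>\<in>UNIV. Dc N \<beta> (Dc N \<gamma> (\<lambda>q. Q q $ \<beta> $ \<gamma>)) p)
        * (if w = s then 1 else 0)"
  by (simp add: alpha_h_def)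

lemma V_supp: "Q \<in> Vspace N \<Longrightarrow> supp_in N 0 (\<lambda>q. Q q $ i $ j)"
  unfolding Vspace_def bc_def supp_in_def box_def interior_pts_def
  by (smt (verit, ccfv_threshold) mem_Collect_eq zero_index)
lemma V_symm: "Q \<in> Vspace N \<Longrightarrow> Q p $ i $ j = Q p $ j $ i"
  unfolding Vspace_def symm_def
  by (metis (mono_tags, lifting) mem_Collect_eq transpose_def vec_lambda_beta)
lemma V_trace: "Q \<in> Vspace N \<Longrightarrow> (\<Sum>i\<in>UNIV. Q p $ i $ i) = 0"
  unfolding Vspace_def trace_def by auto

lemma pointwise:
  "frob (opA a b c A0 L1 L2 L3 M dt N Qn Qnm1 Q1 p) (Q2 p) =
     (1/dt) * frob (Q1 p) (Q2 p)
   - (M*L1/2) * (\<Sum>i\<in>UNIV. \<Sum>j\<in>UNIV. \<Sum>\<alpha>\<in>UNIV. Dm N \<alpha> (Dp N \<alpha> (\<lambda>q. Q1 q $ i $ j)) p * Q2 p $ i $ j)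
   + (M/2) * (frob (Pbar a b c A0 Qn Qnm1 p) (Q1 p) * frob (Pbar a b c A0 Qn Qnm1 p) (Q2 p))
   - (M*(L2+L3)/4) * (\<Sum>i\<in>UNIV. \<Sum>j\<in>UNIV. alpha_h N Q1 p $ i $ j * Q2 p $ i $ j)"
proof -
  define P where "P = Pbar a b c A0 Qn Qnm1 p"
  define k where "k = M/2 * frob P (Q1 p)"
  have e: "opA a b c A0 L1 L2 L3 M dt N Qn Qnm1 Q1 p $ i $ j * Q2 p $ i $ j =
     (1/dt) * (Q1 p $ i $ j * Q2 p $ i $ j)
   - (M*L1/2) * (\<Sum>\<alpha>\<in>UNIV. Dm N \<alpha> (Dp N \<alpha> (\<lambda>q. Q1 q $ i $ j)) p * Q2 p $ i $ j)
   + k * (P $ i $ j * Q2 p $ i $ j)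
   - (M*(L2+L3)/4) * (alpha_h N Q1 p $ i $ j * Q2 p $ i $ j)" for i j
    unfolding k_def
    by (simp add: opA_def Let_def P_def lap_comp sum_distrib_right sum_distrib_left algebra_simps)
  have "frob (opA a b c A0 L1 L2 L3 M dt N Qn Qnm1 Q1 p) (Q2 p) =
     (1/dt) * frob (Q1 p) (Q2 p)
   - (M*L1/2) * (\<Sum>i\<in>UNIV. \<Sum>j\<in>UNIV. \<Sum>\<alpha>\<in>UNIV. Dm N \<alpha> (Dp N \<alpha> (\<lambda>q. Q1 q $ i $ j)) p * Q2 p $ i $ j)
   + k * frob P (Q2 p)
   - (M*(L2+L3)/4) * (\<Sum>i\<in>UNIV. \<Sum>j\<in>UNIV. alpha_h N Q1 p $ i $ j * Q2 p $ i $ j)"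
    unfolding frob_def e
    by (simp add: sum.distrib sum_subtractf sum_distrib_left)
  then show ?thesis unfolding k_def P_def by simp
qed


definition Gf :: "nat \<Rightarrow> gridfun \<Rightarrow> gridfun \<Rightarrow> real" where
  "Gf N Q1 Q2 = (\<Sum>i\<in>UNIV. \<Sum>j\<in>UNIV. \<Sum>\<alpha>\<in>UNIV.
      SS N (\<lambda>p. Dp N \<alpha> (\<lambda>q. Q1 q $ i $ j) p * Dp N \<alpha> (\<lambda>q. Q2 q $ i $ j) p))"
definition dv :: "nat \<Rightarrow> gridfun \<Rightarrow> 3 \<Rightarrow> int^3 \<Rightarrow> real" where
  "dv N Q s p = (\<Sum>\<beta>\<in>UNIV. Dc N \<beta> (\<lambda>q. Q q $ s $ \<beta>) p)"
definition Df :: "nat \<Rightarrow> gridfun \<Rightarrow> gridfun \<Rightarrow> real" where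
  "Df N Q1 Q2 = (\<Sum>s\<in>UNIV. SS N (\<lambda>p. dv N Q1 s p * dv N Q2 s p))"

lemma V_supp8: "Q \<in> Vspace N \<Longrightarrow> supp_in N 8 (\<lambda>q. Q q $ i $ j)"
  by (rule supp_in_mono[OF V_supp]) simp_all

lemma lap_part:
  assumes "Q1 \<in> Vspace N" "Q2 \<in> Vspace N"
  shows "SS N (\<lambda>p. \<Sum>i\<in>UNIV. \<Sum>j\<in>UNIV. \<Sum>\<alpha>\<in>UNIV. Dm N \<alpha> (Dp N \<alpha> (\<lambda>q. Q1 q $ i $ j)) p * Q2 p $ i $ j)
        = - Gf N Q1 Q2"
  unfolding SS_sum Gf_def
  by (simp add: byparts_Dpm[OF V_supp8[OF assms(1)] V_supp8[OF assms(2)]] sum_negf)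

lemma alpha_pointwise:
  assumes "Q2 \<in> Vspace N"
  shows "(\<Sum>w\<in>UNIV. \<Sum>s\<in>UNIV. alpha_h N Q1 p $ w $ s * Q2 p $ w $ s)
     = 2 * (\<Sum>w\<in>UNIV. \<Sum>s\<in>UNIV. \<Sum>\<beta>\<in>UNIV. Dc N w (Dc N \<beta> (\<lambda>q. Q1 q $ s $ \<beta>)) p * Q2 p $ w $ s)"
proof -
  define T where "T = 2 / 3 * (\<Sum>\<beta>\<in>UNIV. \<Sum>\<gamma>\<in>UNIV. Dc N \<beta> (Dc N \<gamma> (\<lambda>q. Q1 q $ \<beta> $ \<gamma>)) p)"
  define X where "X = (\<Sum>w\<in>UNIV. \<Sum>s\<in>UNIV. \<Sum>\<beta>\<in>UNIV. Dc N w (Dc N \<beta> (\<lambda>q. Q1 q $ s $ \<beta>)) p * Q2 p $ w $ s)"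
  define Y where "Y = (\<Sum>w\<in>UNIV. \<Sum>s\<in>UNIV. \<Sum>\<beta>\<in>UNIV. Dc N s (Dc N \<beta> (\<lambda>q. Q1 q $ w $ \<beta>)) p * Q2 p $ w $ s)"
  have ent: "alpha_h N Q1 p $ w $ s * Q2 p $ w $ s =
     (\<Sum>\<beta>\<in>UNIV. Dc N w (Dc N \<beta> (\<lambda>q. Q1 q $ s $ \<beta>)) p * Q2 p $ w $ s)
   + (\<Sum>\<beta>\<in>UNIV. Dc N s (Dc N \<beta> (\<lambda>q. Q1 q $ w $ \<beta>)) p * Q2 p $ w $ s)
   - T * (if w = s then 1 else 0) * Q2 p $ w $ s" for w s
    unfolding alpha_comp T_def[symmetric] sum_distrib_right[symmetric]
    by (simp add: algebra_simps sum.distrib)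
  have "(\<Sum>w\<in>UNIV. \<Sum>s\<in>UNIV. alpha_h N Q1 p $ w $ s * Q2 p $ w $ s)
      = X + Y - (\<Sum>w\<in>UNIV. \<Sum>s\<in>UNIV. T * (if w = s then 1 else 0) * Q2 p $ w $ s)"
    unfolding ent X_def Y_def
    by (simp only: sum.distrib sum_subtractf)
  also have "(\<Sum>w\<in>UNIV. \<Sum>s\<in>UNIV. T * (if w = s then 1 else 0) * Q2 p $ w $ s) = T * (\<Sum>w\<in>UNIV. Q2 p $ w $ w)"
  proof -
    have d: "T * (if w = s then 1 else 0) * x = (if w = s then T * x else 0)" for w s and x :: real by simp
    show ?thesis unfolding d by (simp add: sum_distrib_left)
  qed
  also have "\<dots> = 0" using V_trace[OF assms] by simp
  also have "Y = (\<Sum>s\<in>UNIV. \<Sum>w\<in>UNIV. \<Sum>\<beta>\<in>UNIV. Dc N s (Dc N \<beta> (\<lambda>q. Q1 q $ w $ \<beta>)) p * Q2 p $ w $ s)"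
    unfolding Y_def by (rule sum.swap)
  also have "\<dots> = X" unfolding X_def
    by (rule sum.cong[OF refl])+ (simp add: V_symm[OF assms, of p])
  finally show ?thesis unfolding X_def by simp
qed

lemma alpha_part:
  assumes "Q1 \<in> Vspace N" "Q2 \<in> Vspace N"
  shows "SS N (\<lambda>p. \<Sum>w\<in>UNIV. \<Sum>s\<in>UNIV. \<Sum>\<beta>\<in>UNIV. Dc N w (Dc N \<beta> (\<lambda>q. Q1 q $ s $ \<beta>)) p * Q2 p $ w $ s)
         = - Df N Q1 Q2"
proof -
  have s1: "supp_in N 8 (Dc N \<beta> (\<lambda>q. Q1 q $ s $ \<beta>))" for s \<beta>
    by (rule supp_in_mono[OF supp_Dc[OF V_supp[OF assms(1)]]]) simp
  have "SS N (\<lambda>p. \<Sum>w\<in>UNIV. \<Sum>s\<in>UNIV. \<Sum>\<beta>\<in>UNIV. Dc N w (Dc N \<beta> (\<lambda>q. Q1 q $ s $ \<beta>)) p * Q2 p $ w $ s)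
     = - (\<Sum>w\<in>UNIV. \<Sum>s\<in>UNIV. \<Sum>\<beta>\<in>UNIV. SS N (\<lambda>p. Dc N \<beta> (\<lambda>q. Q1 q $ s $ \<beta>) p * Dc N w (\<lambda>q. Q2 q $ w $ s) p))"
  proof -
    have step1: "SS N (\<lambda>p. Dc N w (Dc N \<beta> (\<lambda>q. Q1 q $ s $ \<beta>)) p * Q2 p $ w $ s)
       = - SS N (\<lambda>p. Dc N \<beta> (\<lambda>q. Q1 q $ s $ \<beta>) p * Dc N w (\<lambda>q. Q2 q $ w $ s) p)" for w s \<beta>
      by (rule byparts_Dc[OF s1 V_supp8[OF assms(2)]])
    show ?thesis by (simp only: SS_sum step1 sum_negf)
  qed
  also have "(\<Sum>w\<in>UNIV. \<Sum>s\<in>UNIV. \<Sum>\<beta>\<in>UNIV. SS N (\<lambda>p. Dc N \<beta> (\<lambda>q. Q1 q $ s $ \<beta>) p * Dc N w (\<lambda>q. Q2 q $ w $ s) p))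
      = (\<Sum>s\<in>UNIV. \<Sum>w\<in>UNIV. \<Sum>\<beta>\<in>UNIV. SS N (\<lambda>p. Dc N \<beta> (\<lambda>q. Q1 q $ s $ \<beta>) p * Dc N w (\<lambda>q. Q2 q $ w $ s) p))"
    by (rule sum.swap)
  also have "\<dots> = (\<Sum>s\<in>UNIV. \<Sum>\<beta>\<in>UNIV. \<Sum>w\<in>UNIV. SS N (\<lambda>p. Dc N \<beta> (\<lambda>q. Q1 q $ s $ \<beta>) p * Dc N w (\<lambda>q. Q2 q $ s $ w) p))"
  proof -
    have fe: "(\<lambda>q. Q2 q $ w $ s) = (\<lambda>q. Q2 q $ s $ w)" for w s using V_symm[OF assms(2)] by auto
    have "(\<Sum>s\<in>UNIV. \<Sum>w\<in>UNIV. \<Sum>\<beta>\<in>UNIV. SS N (\<lambda>p. Dc N \<beta> (\<lambda>q. Q1 q $ s $ \<beta>) p * Dc N w (\<lambda>q. Q2 q $ w $ s) p))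
      = (\<Sum>s\<in>UNIV. \<Sum>\<beta>\<in>UNIV. \<Sum>w\<in>UNIV. SS N (\<lambda>p. Dc N \<beta> (\<lambda>q. Q1 q $ s $ \<beta>) p * Dc N w (\<lambda>q. Q2 q $ w $ s) p))"
      by (rule sum.cong[OF refl], rule sum.swap)
    also have "\<dots> = (\<Sum>s\<in>UNIV. \<Sum>\<beta>\<in>UNIV. \<Sum>w\<in>UNIV. SS N (\<lambda>p. Dc N \<beta> (\<lambda>q. Q1 q $ s $ \<beta>) p * Dc N w (\<lambda>q. Q2 q $ s $ w) p))"
      by (simp only: fe)
    finally show ?thesis .
  qed
  also have "\<dots> = Df N Q1 Q2"
  proof -
    have "Df N Q1 Q2 = (\<Sum>s\<in>UNIV. \<Sum>\<beta>\<in>UNIV. \<Sum>w\<in>UNIV. SS N (\<lambda>p. Dc N \<beta> (\<lambda>q. Q1 q $ s $ \<beta>) p * Dc N w (\<lambda>q. Q2 q $ s $ w) p))"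
      unfolding Df_def dv_def sum_product by (simp only: SS_sum)
    then show ?thesis by (rule sym)
  qed
  finally show ?thesis .
qed

lemma decomp:
  assumes "Q1 \<in> Vspace N" "Q2 \<in> Vspace N"
  shows "SS N (\<lambda>p. frob (opA a b c A0 L1 L2 L3 M dt N Qn Qnm1 Q1 p) (Q2 p)) =
     (1/dt) * SS N (\<lambda>p. frob (Q1 p) (Q2 p)) + (M*L1/2) * Gf N Q1 Q2
   + (M/2) * SS N (\<lambda>p. frob (Pbar a b c A0 Qn Qnm1 p) (Q1 p) * frob (Pbar a b c A0 Qn Qnm1 p) (Q2 p))
   + (M*(L2+L3)/2) * Df N Q1 Q2"
proof -
  have "SS N (\<lambda>p. frob (opA a b c A0 L1 L2 L3 M dt N Qn Qnm1 Q1 p) (Q2 p)) =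
     (1/dt) * SS N (\<lambda>p. frob (Q1 p) (Q2 p)) - (M*L1/2) * (- Gf N Q1 Q2)
   + (M/2) * SS N (\<lambda>p. frob (Pbar a b c A0 Qn Qnm1 p) (Q1 p) * frob (Pbar a b c A0 Qn Qnm1 p) (Q2 p))
   - (M*(L2+L3)/4) * (2 * (- Df N Q1 Q2))"
    unfolding pointwise alpha_pointwise[OF assms(2)] SS_add SS_diff SS_cmult
      lap_part[OF assms] alpha_part[OF assms] by (rule refl)
  then show ?thesis by (simp add: field_simps)
qed


lemma frob_zero_r: "frob A 0 = 0" by (simp add: frob_def)
lemma frob_zero_l: "frob 0 A = 0" by (simp add: frob_def)
lemma frob_comm: "frob A B = frob B A" by (simp add: frob_def mult.commute)

lemma closed_eq: "closed_pts N = box N 0" by (simp add: closed_pts_def box_def)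
lemma int_sub: "interior_pts N \<subseteq> box N 0" unfolding interior_pts_def box_def
proof (safe)
  fix x :: "int^3" and k assume "\<forall>k. 1 \<le> x $ k \<and> x $ k \<le> int N"
  then have "1 \<le> x $ k \<and> x $ k \<le> int N" by blast
  then show "- 0 \<le> x $ k" "x $ k \<le> int N + 1 + 0" by linarith+
qed

lemma ip_SS:
  assumes "\<forall>p. p \<notin> interior_pts N \<longrightarrow> frob (A p) (B p) = 0"
  shows "ip_h N A B = meshsize N ^ 3 * SS N (\<lambda>p. frob (A p) (B p))"
proof -
  have "(\<Sum>p\<in>box N 0. frob (A p) (B p)) = SS N (\<lambda>p. frob (A p) (B p))"
    unfolding SS_def
  proof (rule sum.mono_neutral_left)
    show "finite (box N 10)" by (rule finite_box)
    show "box N 0 \<subseteq> box N 10" unfolding box_def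
    proof (safe)
      fix x :: "int^3" and k assume "\<forall>k. - 0 \<le> x $ k \<and> x $ k \<le> int N + 1 + 0"
      then have "- 0 \<le> x $ k \<and> x $ k \<le> int N + 1 + 0" by blast
      then show "- 10 \<le> x $ k" "x $ k \<le> int N + 1 + 10" by linarith+
    qed
    show "\<forall>i\<in>box N 10 - box N 0. frob (A i) (B i) = 0" using assms int_sub by blast
  qed
  then show ?thesis unfolding ip_h_def closed_eq by simp
qed

lemma box_mono: assumes "r \<le> r'" shows "box N r \<subseteq> box N r'"
proof
  fix x assume x: "x \<in> box N r"
  show "x \<in> box N r'" unfolding box_def
  proof (safe)
    fix k
    have "-r \<le> x$k \<and> x$k \<le> int N + 1 + r" using x by (simp add: box_def)
    then show "-r' \<le> x$k" "x$k \<le> int N + 1 + r'" using assms by linarith+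
  qed
qed

lemma V_zero: "Q \<in> Vspace N \<Longrightarrow> p \<notin> interior_pts N \<Longrightarrow> Q p = 0"
  by (simp add: Vspace_def bc_def)

lemma Gf_sym: "Gf N Q1 Q2 = Gf N Q2 Q1" unfolding Gf_def by (simp add: mult.commute)
lemma Df_sym: "Df N Q1 Q2 = Df N Q2 Q1" unfolding Df_def by (simp add: mult.commute)
lemma Gf_nonneg: "0 \<le> Gf N Q Q" unfolding Gf_def by (intro sum_nonneg SS_nonneg) simp
lemma Df_nonneg: "0 \<le> Df N Q Q" unfolding Df_def by (intro sum_nonneg SS_nonneg) simp

lemma SS_frob_pos:
  assumes "Q \<in> Vspace N" "Q \<noteq> (\<lambda>_. 0)"
  shows "0 < SS N (\<lambda>p. frob (Q p) (Q p))"
proof -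
  obtain p where p: "Q p \<noteq> 0" using assms(2) by auto
  then have pi: "p \<in> interior_pts N" using V_zero[OF assms(1)] by blast
  have b010: "box N 0 \<subseteq> box N 10" by (rule box_mono) simp
  have pb: "p \<in> box N 10" using pi int_sub b010 by blast
  obtain i j where ij: "Q p $ i $ j \<noteq> 0" using p by (metis vec_eq_iff zero_index)
  have sq: "0 < Q p $ i $ j * Q p $ i $ j" using ij by (metis not_real_square_gt_zero)
  have inner: "0 < (\<Sum>j'\<in>UNIV. Q p $ i $ j' * Q p $ i $ j')"
    by (rule sum_pos2[of UNIV j]) (simp_all add: sq)
  have fp: "0 < frob (Q p) (Q p)" unfolding frob_def
    by (rule sum_pos2[of UNIV i]) (simp_all add: inner sum_nonneg)
  have nn: "\<And>q. q \<in> box N 10 \<Longrightarrow> 0 \<le> frob (Q q) (Q q)" by (simp add: frob_def sum_nonneg)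
  show ?thesis unfolding SS_def
    by (rule sum_pos2[where f="\<lambda>q. frob (Q q) (Q q)", OF finite_box pb fp nn])
qed

theorem theorem4p5:
  fixes a b c L1 L2 L3 M dt A0 :: real and N :: nat and Qn Qnm1 :: gridfun
  assumes "c > 0" "L1 > 0" "L2 > 0" "L3 > 0" "M > 0" "dt > 0" "A0 > 0"
    and "Inf {bulk_energy a b c A0 Q | Q. symm Q} > 0"
    and "Qn \<in> Vspace N" and "Qnm1 \<in> Vspace N"
  shows "(\<forall>Q1\<in>Vspace N. \<forall>Q2\<in>Vspace N.
            ip_h N (opA a b c A0 L1 L2 L3 M dt N Qn Qnm1 Q1) Q2
          = ip_h N Q1 (opA a b c A0 L1 L2 L3 M dt N Qn Qnm1 Q2))
      \<and> (\<forall>Q\<in>Vspace N. Q \<noteq> (\<lambda>_. 0) \<longrightarrow>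
            ip_h N (opA a b c A0 L1 L2 L3 M dt N Qn Qnm1 Q) Q > 0)"
proof (intro conjI ballI impI)
  let ?A = "opA a b c A0 L1 L2 L3 M dt N Qn Qnm1"
  let ?P = "Pbar a b c A0 Qn Qnm1"
  fix Q1 Q2 assume Q1: "Q1 \<in> Vspace N" and Q2: "Q2 \<in> Vspace N"
  have "ip_h N (?A Q1) Q2 = meshsize N ^ 3 * SS N (\<lambda>p. frob (?A Q1 p) (Q2 p))"
    by (rule ip_SS) (simp add: V_zero[OF Q2] frob_zero_r)
  also have "\<dots> = meshsize N ^ 3 * SS N (\<lambda>p. frob (?A Q2 p) (Q1 p))"
  proof -
    have e1: "SS N (\<lambda>p. frob (Q1 p) (Q2 p)) = SS N (\<lambda>p. frob (Q2 p) (Q1 p))"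
      by (rule SS_cong) (rule frob_comm)
    have e2: "SS N (\<lambda>p. frob (?P p) (Q1 p) * frob (?P p) (Q2 p)) = SS N (\<lambda>p. frob (?P p) (Q2 p) * frob (?P p) (Q1 p))"
      by (rule SS_cong) (rule mult.commute)
    show ?thesis
      by (simp only: decomp[OF Q1 Q2] decomp[OF Q2 Q1] e1 e2 Gf_sym[of N Q1 Q2] Df_sym[of N Q1 Q2])
  qed
  also have "\<dots> = ip_h N Q1 (?A Q2)"
    by (subst ip_SS) (simp_all add: V_zero[OF Q1] frob_zero_l frob_comm)
  finally show "ip_h N (?A Q1) Q2 = ip_h N Q1 (?A Q2)" .
next
  let ?A = "opA a b c A0 L1 L2 L3 M dt N Qn Qnm1"
  fix Q assume Q: "Q \<in> Vspace N" and nz: "Q \<noteq> (\<lambda>_. 0)"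
  have h: "0 < meshsize N ^ 3" by (simp add: meshsize_def)
  have ipq: "ip_h N (?A Q) Q = meshsize N ^ 3 * SS N (\<lambda>p. frob (?A Q p) (Q p))"
    by (rule ip_SS) (simp add: V_zero[OF Q] frob_zero_r)
  have pos: "0 < SS N (\<lambda>p. frob (?A Q p) (Q p))"
  proof -
    have t1: "0 < (1/dt) * SS N (\<lambda>p. frob (Q p) (Q p))"
      using SS_frob_pos[OF Q nz] assms(6) by simp
    have t2: "0 \<le> (M*L1/2) * Gf N Q Q" using Gf_nonneg[of N Q] assms(2,5) by simp
    have t3: "0 \<le> (M/2) * SS N (\<lambda>p. frob (Pbar a b c A0 Qn Qnm1 p) (Q p) * frob (Pbar a b c A0 Qn Qnm1 p) (Q p))"
    proof (rule mult_nonneg_nonneg)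
      show "0 \<le> M / 2" using assms(5) by simp
      show "0 \<le> SS N (\<lambda>p. frob (Pbar a b c A0 Qn Qnm1 p) (Q p) * frob (Pbar a b c A0 Qn Qnm1 p) (Q p))"
        by (rule SS_nonneg) simp
    qed
    have t4: "0 \<le> (M*(L2+L3)/2) * Df N Q Q" using Df_nonneg[of N Q] assms(3,4,5) by simp
    show ?thesis unfolding decomp[OF Q Q]
      by (rule add_pos_nonneg[OF add_pos_nonneg[OF add_pos_nonneg[OF t1 t2] t3] t4])
  qed
  show "0 < ip_h N (?A Q) Q" unfolding ipq by (rule mult_pos_pos[OF h pos])
qed

end
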